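(* Let $p,q,r\in(0,1)$ with $p+q+r=1$. Let $X_1,\eta_2,\eta_3,\ldots$ be independent random variables, each taking the values $1,-1,0$ with probabilities $p,q,r$ respectively, and let $K_3,K_4,\ldots$ be independent random variables, independent of the previous ones, with $K_{n+1}$ uniformly distributed on $\{1,n\}$. Set $X_2=\eta_2X_1$, $X_{n+1}=\eta_{n+1}X_{K_{n+1}}$ for $n\ge2$, and $S_n=\sum_{k=1}^nX_k$. Then, as $n\to\infty$, $S_n/n$ converges in distribution to a random variable $S$ taking the value $\frac{p-q}{2+q-p}$ with probability $p$, the value $0$ with probability $r$, and the value $-\frac{p-q}{2+q-p}$ with probability $q$. Moreover, for every real $\alpha>0$, $E|S_n/n|^\alpha\to E|S|^\alpha$, and for every positive integer $k$, $E\big((S_n/n)^k\big)\to E(S^k)$, as $n\to\infty$.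
   Context: This is the elephant random walk with delays in which the elephant remembers only the first step and the most recent step: step $n+1$ ($n\ge2$) picks one of $X_1,X_n$ uniformly at random and repeats it (probability $p$), reverses it (probability $q$), or is $0$ (probability $r$). Note that $|S_n/n|\le1$ for all $n$. *)

theory Defs
  imports "HOL-Probability.Probability"
begin

text \<open>The step X_n is defined literally as eta_n times X_(K_n); since K_(n+1) takes values in {1,n}
  almost surely, the guard below only matters on a null set (where we put 0).\<close>

function erw_step :: "('a \<Rightarrow> real) \<Rightarrow> (nat \<Rightarrow> 'a \<Rightarrow> real) \<Rightarrow> (nat \<Rightarrow> 'a \<Rightarrow> nat) \<Rightarrow> nat \<Rightarrow> 'a \<Rightarrow> real"
  where
  "erw_step X1 eta K n \<omega> =
     (if n = 0 then 0
      else if n = 1 then X1 \<omega>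
      else if n = 2 then eta 2 \<omega> * X1 \<omega>
      else eta n \<omega> * (if 1 \<le> K n \<omega> \<and> K n \<omega> < n then erw_step X1 eta K (K n \<omega>) \<omega> else 0))"
  by pat_completeness auto
termination
  by (relation "Wellfounded.measure (\<lambda>(_, _, _, n, _). n)") auto

declare erw_step.simps [simp del]

definition erw_sum :: "('a \<Rightarrow> real) \<Rightarrow> (nat \<Rightarrow> 'a \<Rightarrow> real) \<Rightarrow> (nat \<Rightarrow> 'a \<Rightarrow> nat) \<Rightarrow> nat \<Rightarrow> 'a \<Rightarrow> real"
  where "erw_sum X1 eta K n \<omega> = (\<Sum>k=1..n. erw_step X1 eta K k \<omega>)"

text \<open>Independence is expressed for the whole family via a sum-type valued index/value.\<close>

definition erw_hyps :: "'a measure \<Rightarrow> real \<Rightarrow> real \<Rightarrow> real \<Rightarrow> ('a \<Rightarrow> real) \<Rightarrow> (nat \<Rightarrow> 'a \<Rightarrow> real) \<Rightarrow> (nat \<Rightarrow> 'a \<Rightarrow> nat) \<Rightarrow> bool"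
  where
  "erw_hyps M p q r X1 eta K \<longleftrightarrow>
     prob_space M \<and>
     X1 \<in> measurable M (count_space UNIV) \<and>
     (\<forall>n\<ge>2. eta n \<in> measurable M (count_space UNIV)) \<and>
     (\<forall>n\<ge>3. K n \<in> measurable M (count_space UNIV)) \<and>
     measure M {\<omega>\<in>space M. X1 \<omega> = 1} = p \<and>
     measure M {\<omega>\<in>space M. X1 \<omega> = -1} = q \<and>
     measure M {\<omega>\<in>space M. X1 \<omega> = 0} = r \<and>
     (\<forall>n\<ge>2. measure M {\<omega>\<in>space M. eta n \<omega> = 1} = p \<and>
             measure M {\<omega>\<in>space M. eta n \<omega> = -1} = q \<and>
             measure M {\<omega>\<in>space M. eta n \<omega> = 0} = r) \<and>
     (\<forall>n\<ge>2. measure M {\<omega>\<in>space M. K (n+1) \<omega> = 1} = 1/2 \<and>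
             measure M {\<omega>\<in>space M. K (n+1) \<omega> = n} = 1/2) \<and>
     prob_space.indep_vars M (\<lambda>_. count_space UNIV)
       (\<lambda>i \<omega>. (case i of Inl n \<Rightarrow> Inl (if n = 1 then X1 \<omega> else eta n \<omega>)
                       | Inr n \<Rightarrow> Inr (K n \<omega>)) :: real + nat)
       (Inl ` {1::nat..} \<union> Inr ` {3::nat..})"

definition erw_limit_pmf :: "real \<Rightarrow> real \<Rightarrow> real \<Rightarrow> real pmf" where
  "erw_limit_pmf p q r =
     pmf_of_list [((p - q) / (2 + q - p), p), (0, r), (- ((p - q) / (2 + q - p)), q)]"

end

theory Submission
  imports Defs
begin

definition clip :: "real \<Rightarrow> real" where "clip x = max (-1) (min 1 x)"

lemma abs_clip: "\<bar>clip x\<bar> \<le> 1" unfolding clip_def by auto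

fun gr :: "real + nat \<Rightarrow> real" where
  "gr (Inl x) = clip x" | "gr (Inr _) = 0"

fun gn :: "real + nat \<Rightarrow> nat" where
  "gn (Inr k) = k" | "gn (Inl _) = 0"

fun wv :: "nat \<Rightarrow> (nat + nat \<Rightarrow> real + nat) \<Rightarrow> real" where
  "wv 0 y = 1"
| "wv (Suc n) y = (if n = 0 then 1 else gr (y (Inl (Suc n))) *
      (if n = 1 then 1 else if gn (y (Inr (Suc n))) = 1 then 1 else wv n y))"

definition deps :: "nat \<Rightarrow> (nat + nat) set" where
  "deps k = Inl ` {2..k} \<union> Inr ` {3..k}"

lemma abs_gr: "\<bar>gr z\<bar> \<le> 1" by (cases z) (auto simp: abs_clip)

lemma abs_wv: "\<bar>wv k y\<bar> \<le> 1"
proof (induction k)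
  case (Suc n) then show ?case using abs_gr[of "y (Inl (Suc n))"]
    by (auto simp: abs_mult intro: mult_le_one)
qed simp

lemma wv_cong: "(\<And>i. i \<in> deps k \<Longrightarrow> y i = y' i) \<Longrightarrow> wv k y = wv k y'"
proof (induction k)
  case (Suc n)
  have "wv n y = wv n y'" using Suc by (intro Suc.IH) (auto simp: deps_def)
  moreover have "n \<noteq> 0 \<Longrightarrow> y (Inl (Suc n)) = y' (Inl (Suc n))" using Suc.prems by (auto simp: deps_def)
  moreover have "n > 1 \<Longrightarrow> y (Inr (Suc n)) = y' (Inr (Suc n))" using Suc.prems by (auto simp: deps_def)
  ultimately show ?case by auto
qed simp

lemma wv_meas: "deps k \<subseteq> C \<Longrightarrow> wv k \<in> borel_measurable (PiM C (\<lambda>_. count_space UNIV))"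
proof (induction k)
  case 0 then show ?case by simp
next
  case (Suc n)
  have IH: "n > 1 \<Longrightarrow> wv n \<in> borel_measurable (PiM C (\<lambda>_. count_space UNIV))"
    using Suc by (intro Suc.IH) (auto simp: deps_def)
  have m1: "n \<noteq> 0 \<Longrightarrow> (\<lambda>y. gr (y (Inl (Suc n)))) \<in> borel_measurable (PiM C (\<lambda>_. count_space UNIV))"
    using Suc.prems
    by (intro measurable_compose[OF measurable_component_singleton[of "Inl (Suc n)"]]) (auto simp: deps_def)
  have m2: "n > 1 \<Longrightarrow> (\<lambda>y. if gn (y (Inr (Suc n))) = 1 then 1::real else 0) \<in> borel_measurable (PiM C (\<lambda>_. count_space UNIV))"
    using Suc.prems
    by (intro measurable_compose[OF measurable_component_singleton[of "Inr (Suc n)"]]) (auto simp: deps_def)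
  have eq: "wv (Suc n) = (\<lambda>y. if n = 0 then 1 else if n = 1 then gr (y (Inl (Suc n))) else
     gr (y (Inl (Suc n))) * ((if gn (y (Inr (Suc n))) = 1 then 1::real else 0) + (1 - (if gn (y (Inr (Suc n))) = 1 then 1::real else 0)) * wv n y))"
    by (auto simp: fun_eq_iff)
  show ?case unfolding eq
    using m1 m2 IH by (cases "n = 0"; cases "n = 1") auto
qed

definition Cs :: "nat \<Rightarrow> (nat + nat) set" where
  "Cs n = Inl ` {2..<n} \<union> Inr ` {3..<n}"

locale erw = prob_space M for M :: "'a measure" +
  fixes p q r :: real and X1 :: "'a \<Rightarrow> real" and eta :: "nat \<Rightarrow> 'a \<Rightarrow> real" and K :: "nat \<Rightarrow> 'a \<Rightarrow> nat"
  assumes pqr: "p \<in> {0<..<1}" "q \<in> {0<..<1}" "r \<in> {0<..<1}" "p + q + r = 1"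
    and hyps: "erw_hyps M p q r X1 eta K"
begin

definition Yf :: "nat + nat \<Rightarrow> 'a \<Rightarrow> real + nat" where
  "Yf = (\<lambda>i \<omega>. (case i of Inl n \<Rightarrow> Inl (if n = 1 then X1 \<omega> else eta n \<omega>)
                       | Inr n \<Rightarrow> Inr (K n \<omega>)) :: real + nat)"

definition II :: "(nat + nat) set" where "II = Inl ` {1::nat..} \<union> Inr ` {3::nat..}"

lemma ind: "indep_vars (\<lambda>_. count_space UNIV) Yf II"
  using hyps unfolding erw_hyps_def Yf_def II_def by blast

lemma Yf_meas: "i \<in> II \<Longrightarrow> Yf i \<in> measurable M (count_space UNIV)"
  using ind unfolding indep_vars_def by blast

lemma X1_meas[measurable]: "X1 \<in> measurable M (count_space UNIV)"
  using hyps unfolding erw_hyps_def by blast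
lemma eta_meas[measurable]: "n \<ge> 2 \<Longrightarrow> eta n \<in> measurable M (count_space UNIV)"
  using hyps unfolding erw_hyps_def by blast
lemma K_meas[measurable]: "n \<ge> 3 \<Longrightarrow> K n \<in> measurable M (count_space UNIV)"
  using hyps unfolding erw_hyps_def by blast

lemma X1_borel[measurable]: "X1 \<in> borel_measurable M"
  by (rule measurable_compose[OF X1_meas]) simp
lemma eta_borel[measurable]: "n \<ge> 2 \<Longrightarrow> eta n \<in> borel_measurable M"
  by (rule measurable_compose[OF eta_meas]) simp_all

lemma sets_eq_count: "f \<in> measurable M (count_space UNIV) \<Longrightarrow> {\<omega>\<in>space M. P (f \<omega>)} \<in> sets M"
proof -
  assume f: "f \<in> measurable M (count_space UNIV)"
  have "{\<omega>\<in>space M. P (f \<omega>)} = f -` {x. P x} \<inter> space M" by auto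
  then show ?thesis using measurable_sets[OF f, of "{x. P x}"] by simp
qed

definition W :: "nat \<Rightarrow> 'a \<Rightarrow> real" where "W k \<omega> = wv k (\<lambda>i. Yf i \<omega>)"

lemma deps_II: "deps k \<subseteq> II" unfolding deps_def II_def by auto
lemma Cs_II: "Cs k \<subseteq> II" unfolding Cs_def II_def by auto

lemma W_restrict: "deps k \<subseteq> C \<Longrightarrow> W k \<omega> = wv k (restrict (\<lambda>i. Yf i \<omega>) C)"
  unfolding W_def by (rule wv_cong) auto

lemma restrict_meas: "C \<subseteq> II \<Longrightarrow> (\<lambda>\<omega>. restrict (\<lambda>i. Yf i \<omega>) C) \<in> measurable M (PiM C (\<lambda>_. count_space UNIV))"
  by (intro measurable_restrict) (auto intro: Yf_meas)

lemma W_meas[measurable]: "W k \<in> borel_measurable M"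
proof -
  have "W k = (\<lambda>\<omega>. wv k (restrict (\<lambda>i. Yf i \<omega>) (deps k)))" using W_restrict by auto
  also have "\<dots> \<in> borel_measurable M"
    by (rule measurable_compose[OF restrict_meas[OF deps_II] wv_meas]) simp
  finally show ?thesis .
qed

lemma abs_W: "\<bar>W k \<omega>\<bar> \<le> 1" unfolding W_def by (rule abs_wv)

lemma W_1: "W 1 \<omega> = 1" unfolding W_def by simp
lemma W_2: "W 2 \<omega> = clip (eta 2 \<omega>)" unfolding W_def by (simp add: numeral_2_eq_2 Yf_def)
lemma W_rec: "k \<ge> 3 \<Longrightarrow> W k \<omega> = clip (eta k \<omega>) * (if K k \<omega> = 1 then 1 else W (k - 1) \<omega>)"
  unfolding W_def by (cases k) (auto simp: Yf_def)


lemma AE_vals3: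
  assumes f: "f \<in> measurable M (count_space UNIV)" and dist: "a \<noteq> b" "a \<noteq> c" "b \<noteq> c"
    and s: "prob {\<omega>\<in>space M. f \<omega> = a} + prob {\<omega>\<in>space M. f \<omega> = b} + prob {\<omega>\<in>space M. f \<omega> = c} = 1"
  shows "AE \<omega> in M. f \<omega> = a \<or> f \<omega> = b \<or> f \<omega> = c"
proof -
  let ?A = "{\<omega>\<in>space M. f \<omega> = a}" and ?B = "{\<omega>\<in>space M. f \<omega> = b}" and ?C = "{\<omega>\<in>space M. f \<omega> = c}"
  have sets: "?A \<in> events" "?B \<in> events" "?C \<in> events" using sets_eq_count[OF f] by auto
  have "prob (?A \<union> ?B \<union> ?C) = prob ?A + prob ?B + prob ?C"
    using sets dist by (subst finite_measure_Union; auto)+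
  with s have "prob (?A \<union> ?B \<union> ?C) = 1" by simp
  from AE_prob_1[OF this] show ?thesis by eventually_elim auto
qed

lemma AE_vals2:
  assumes f: "f \<in> measurable M (count_space UNIV)" and dist: "a \<noteq> b"
    and s: "prob {\<omega>\<in>space M. f \<omega> = a} + prob {\<omega>\<in>space M. f \<omega> = b} = 1"
  shows "AE \<omega> in M. f \<omega> = a \<or> f \<omega> = b"
proof -
  let ?A = "{\<omega>\<in>space M. f \<omega> = a}" and ?B = "{\<omega>\<in>space M. f \<omega> = b}"
  have sets: "?A \<in> events" "?B \<in> events" using sets_eq_count[OF f] by auto
  have "prob (?A \<union> ?B) = prob ?A + prob ?B"
    using sets dist by (subst finite_measure_Union; auto)+
  with s have "prob (?A \<union> ?B) = 1" by simp
  from AE_prob_1[OF this] show ?thesis by eventually_elim auto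
qed

lemma meas_X1: "prob {\<omega>\<in>space M. X1 \<omega> = 1} = p" "prob {\<omega>\<in>space M. X1 \<omega> = -1} = q"
    "prob {\<omega>\<in>space M. X1 \<omega> = 0} = r"
  using hyps unfolding erw_hyps_def by auto

lemma meas_eta: "n \<ge> 2 \<Longrightarrow> prob {\<omega>\<in>space M. eta n \<omega> = 1} = p"
  "n \<ge> 2 \<Longrightarrow> prob {\<omega>\<in>space M. eta n \<omega> = -1} = q"
  "n \<ge> 2 \<Longrightarrow> prob {\<omega>\<in>space M. eta n \<omega> = 0} = r"
  using hyps unfolding erw_hyps_def by auto

lemma meas_K: assumes "n \<ge> 3" shows "prob {\<omega>\<in>space M. K n \<omega> = 1} = 1/2"
  "prob {\<omega>\<in>space M. K n \<omega> = n - 1} = 1/2"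
proof -
  have "n - 1 \<ge> 2" "Suc (n - 1) = n" using assms by auto
  then show "prob {\<omega>\<in>space M. K n \<omega> = 1} = 1/2" "prob {\<omega>\<in>space M. K n \<omega> = n - 1} = 1/2"
    using hyps unfolding erw_hyps_def by (metis Suc_eq_plus1)+
qed

lemma AE_X1: "AE \<omega> in M. X1 \<omega> = 1 \<or> X1 \<omega> = -1 \<or> X1 \<omega> = 0"
  by (rule AE_vals3[OF X1_meas]) (use pqr meas_X1 in auto)

lemma AE_eta: "AE \<omega> in M. \<forall>n. n \<ge> 2 \<longrightarrow> eta n \<omega> = 1 \<or> eta n \<omega> = -1 \<or> eta n \<omega> = 0"
proof (subst AE_all_countable, intro allI)
  fix n :: nat
  show "AE \<omega> in M. n \<ge> 2 \<longrightarrow> eta n \<omega> = 1 \<or> eta n \<omega> = -1 \<or> eta n \<omega> = 0"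
  proof (cases "n \<ge> 2")
    case True
    have "AE \<omega> in M. eta n \<omega> = 1 \<or> eta n \<omega> = -1 \<or> eta n \<omega> = 0"
      by (rule AE_vals3[OF eta_meas[OF True]]) (use pqr meas_eta[OF True] in auto)
    then show ?thesis by auto
  qed simp
qed

lemma AE_K: "AE \<omega> in M. \<forall>n. n \<ge> 3 \<longrightarrow> K n \<omega> = 1 \<or> K n \<omega> = n - 1"
proof (subst AE_all_countable, intro allI)
  fix n :: nat
  show "AE \<omega> in M. n \<ge> 3 \<longrightarrow> K n \<omega> = 1 \<or> K n \<omega> = n - 1"
  proof (cases "n \<ge> 3")
    case True
    have "AE \<omega> in M. K n \<omega> = 1 \<or> K n \<omega> = n - 1"
      by (rule AE_vals2[OF K_meas[OF True]]) (use True meas_K[OF True] in auto)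
    then show ?thesis by auto
  qed simp
qed

lemma clip_meas[measurable]: "clip \<in> borel_measurable borel"
  unfolding clip_def by measurable

lemma cnt_comp: "f \<in> measurable M (count_space UNIV) \<Longrightarrow> (\<lambda>\<omega>. g (f \<omega>) :: real) \<in> borel_measurable M"
  by (rule measurable_compose[of f M "count_space UNIV"]) auto

lemma int_bdd: "f \<in> borel_measurable M \<Longrightarrow> (\<And>\<omega>. \<bar>f \<omega>\<bar> \<le> B) \<Longrightarrow> integrable M (f :: 'a \<Rightarrow> real)"
  by (rule integrable_const_bound[where B=B]) auto

lemma int_ind: "f \<in> measurable M (count_space UNIV) \<Longrightarrow>
   expectation (\<lambda>\<omega>. if f \<omega> = a then 1::real else 0) = prob {\<omega>\<in>space M. f \<omega> = a}"
proof -
  assume f: "f \<in> measurable M (count_space UNIV)"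
  have "expectation (\<lambda>\<omega>. if f \<omega> = a then 1::real else 0) = expectation (indicator {\<omega>\<in>space M. f \<omega> = a})"
    by (rule Bochner_Integration.integral_cong) (auto simp: indicator_def)
  also have "\<dots> = prob {\<omega>\<in>space M. f \<omega> = a}" by (simp add: Int_absorb2 Collect_conj_eq)
  finally show ?thesis .
qed

lemma E_clip: assumes n: "n \<ge> 2" shows "expectation (\<lambda>\<omega>. clip (eta n \<omega>)) = p - q"
proof -
  have "expectation (\<lambda>\<omega>. clip (eta n \<omega>)) =
     expectation (\<lambda>\<omega>. (if eta n \<omega> = 1 then 1 else 0) - (if eta n \<omega> = -1 then 1 else 0))"
  proof (rule integral_cong_AE)
    show "AE x in M. clip (eta n x) = (if eta n x = 1 then 1 else 0) - (if eta n x = - 1 then 1 else 0)"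
      using AE_eta by eventually_elim (use n in \<open>auto simp: clip_def\<close>)
  qed (use n cnt_comp[OF eta_meas[OF n]] in auto)
  also have "\<dots> = expectation (\<lambda>\<omega>. (if eta n \<omega> = 1 then 1 else 0)) - expectation (\<lambda>\<omega>. if eta n \<omega> = -1 then 1 else 0)"
    by (rule Bochner_Integration.integral_diff; rule int_bdd[where B=1]) (auto intro: cnt_comp[OF eta_meas[OF n]])
  also have "\<dots> = p - q" using int_ind[OF eta_meas[OF n]] meas_eta[OF n] by simp
  finally show ?thesis .
qed

lemma E_K1: assumes n: "n \<ge> 3" shows "expectation (\<lambda>\<omega>. if K n \<omega> = 1 then 1::real else 0) = 1/2"
  using int_ind[OF K_meas[OF n]] meas_K[OF n] by simp

lemma E_K0: assumes n: "n \<ge> 3" shows "expectation (\<lambda>\<omega>. if K n \<omega> = 1 then 0 else 1::real) = 1/2"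
proof -
  have "expectation (\<lambda>\<omega>. if K n \<omega> = 1 then 0 else 1::real) = expectation (\<lambda>\<omega>. 1 - (if K n \<omega> = 1 then 1 else 0))"
    by (rule Bochner_Integration.integral_cong) auto
  also have "\<dots> = expectation (\<lambda>\<omega>. 1) - expectation (\<lambda>\<omega>. (if K n \<omega> = 1 then 1 else 0))"
    by (rule Bochner_Integration.integral_diff; rule int_bdd[where B=1]) (auto intro: cnt_comp[OF K_meas[OF n]])
  also have "\<dots> = 1/2" using E_K1[OF n] prob_space by simp
  finally show ?thesis .
qed


lemma phi_meas: "\<phi> \<in> borel_measurable (PiM C (\<lambda>_. count_space UNIV)) \<Longrightarrow> C \<subseteq> II \<Longrightarrow>
  (\<lambda>\<omega>. \<phi> (restrict (\<lambda>i. Yf i \<omega>) C) :: real) \<in> borel_measurable M"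
  by (rule measurable_compose[OF restrict_meas]) auto

lemma IND:
  assumes n: "n \<ge> 3" and \<phi>: "\<phi> \<in> borel_measurable (PiM (Cs n) (\<lambda>_. count_space UNIV))"
    and \<phi>b: "\<And>v. \<bar>\<phi> v\<bar> \<le> B" and hb: "\<And>k. \<bar>h k\<bar> \<le> Bh"
  shows "expectation (\<lambda>\<omega>. clip (eta n \<omega>) * (h (K n \<omega>) * \<phi> (restrict (\<lambda>i. Yf i \<omega>) (Cs n)))) =
    (p - q) * (expectation (\<lambda>\<omega>. h (K n \<omega>)) * expectation (\<lambda>\<omega>. \<phi> (restrict (\<lambda>i. Yf i \<omega>) (Cs n))))"
proof -
  let ?M' = "\<lambda>_::nat+nat. count_space (UNIV :: (real + nat) set)"
  have n1: "n \<noteq> 1" "n \<ge> 2" using n by auto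
  have sub: "{Inl n} \<subseteq> II" "{Inr n} \<subseteq> II" "{Inr n} \<union> Cs n \<subseteq> II" "Cs n \<subseteq> II"
    using n Cs_II unfolding II_def by auto
  have iv1: "indep_var (PiM {Inl n} ?M') (\<lambda>\<omega>. restrict (\<lambda>i. Yf i \<omega>) {Inl n})
     (PiM ({Inr n} \<union> Cs n) ?M') (\<lambda>\<omega>. restrict (\<lambda>i. Yf i \<omega>) ({Inr n} \<union> Cs n))"
    by (rule indep_var_restrict[OF ind]) (use sub in \<open>auto simp: Cs_def\<close>)
  have m1: "(\<lambda>v. gr (v (Inl n))) \<in> borel_measurable (PiM {Inl n} ?M')"
    by (intro measurable_compose[OF measurable_component_singleton[of "Inl n"]]) auto
  have m2: "(\<lambda>v. h (gn (v (Inr n))) * \<phi> (restrict v (Cs n))) \<in> borel_measurable (PiM ({Inr n} \<union> Cs n) ?M')"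
  proof (rule borel_measurable_times)
    show "(\<lambda>v. h (gn (v (Inr n)))) \<in> borel_measurable (PiM ({Inr n} \<union> Cs n) ?M')"
      by (intro measurable_compose[OF measurable_component_singleton[of "Inr n"]]) auto
    show "(\<lambda>v. \<phi> (restrict v (Cs n))) \<in> borel_measurable (PiM ({Inr n} \<union> Cs n) ?M')"
      by (rule measurable_compose[OF measurable_restrict_subset \<phi>]) auto
  qed
  have iv1': "indep_var borel ((\<lambda>v. gr (v (Inl n))) \<circ> (\<lambda>\<omega>. restrict (\<lambda>i. Yf i \<omega>) {Inl n}))
     borel ((\<lambda>v. h (gn (v (Inr n))) * \<phi> (restrict v (Cs n))) \<circ> (\<lambda>\<omega>. restrict (\<lambda>i. Yf i \<omega>) ({Inr n} \<union> Cs n)))"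
    by (rule indep_var_compose[OF iv1 m1 m2])
  have e1: "((\<lambda>v. gr (v (Inl n))) \<circ> (\<lambda>\<omega>. restrict (\<lambda>i. Yf i \<omega>) {Inl n})) = (\<lambda>\<omega>. clip (eta n \<omega>))"
    using n1 by (auto simp: fun_eq_iff Yf_def)
  have e2: "((\<lambda>v. h (gn (v (Inr n))) * \<phi> (restrict v (Cs n))) \<circ> (\<lambda>\<omega>. restrict (\<lambda>i. Yf i \<omega>) ({Inr n} \<union> Cs n)))
     = (\<lambda>\<omega>. h (K n \<omega>) * \<phi> (restrict (\<lambda>i. Yf i \<omega>) (Cs n)))"
  proof -
    have "insert (Inr n) (Cs n) \<inter> Cs n = Cs n" by auto
    then show ?thesis by (auto simp: fun_eq_iff Yf_def)
  qed
  have iv2: "indep_var (PiM {Inr n} ?M') (\<lambda>\<omega>. restrict (\<lambda>i. Yf i \<omega>) {Inr n})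
     (PiM (Cs n) ?M') (\<lambda>\<omega>. restrict (\<lambda>i. Yf i \<omega>) (Cs n))"
    by (rule indep_var_restrict[OF ind]) (use sub in \<open>auto simp: Cs_def\<close>)
  have m3: "(\<lambda>v. h (gn (v (Inr n)))) \<in> borel_measurable (PiM {Inr n} ?M')"
    by (intro measurable_compose[OF measurable_component_singleton[of "Inr n"]]) auto
  have iv2': "indep_var borel ((\<lambda>v. h (gn (v (Inr n)))) \<circ> (\<lambda>\<omega>. restrict (\<lambda>i. Yf i \<omega>) {Inr n}))
     borel (\<phi> \<circ> (\<lambda>\<omega>. restrict (\<lambda>i. Yf i \<omega>) (Cs n)))"
    by (rule indep_var_compose[OF iv2 m3 \<phi>])
  have e3: "((\<lambda>v. h (gn (v (Inr n)))) \<circ> (\<lambda>\<omega>. restrict (\<lambda>i. Yf i \<omega>) {Inr n})) = (\<lambda>\<omega>. h (K n \<omega>))"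
    by (auto simp: fun_eq_iff Yf_def)
  have e4: "(\<phi> \<circ> (\<lambda>\<omega>. restrict (\<lambda>i. Yf i \<omega>) (Cs n))) = (\<lambda>\<omega>. \<phi> (restrict (\<lambda>i. Yf i \<omega>) (Cs n)))"
    by auto
  have mh: "(\<lambda>\<omega>. h (K n \<omega>)) \<in> borel_measurable M" by (rule cnt_comp[OF K_meas[OF n]])
  have m\<phi>: "(\<lambda>\<omega>. \<phi> (restrict (\<lambda>i. Yf i \<omega>) (Cs n))) \<in> borel_measurable M"
    by (rule phi_meas[OF \<phi> sub(4)])
  have ih: "integrable M (\<lambda>\<omega>. h (K n \<omega>))" by (rule int_bdd[OF mh hb])
  have i\<phi>: "integrable M (\<lambda>\<omega>. \<phi> (restrict (\<lambda>i. Yf i \<omega>) (Cs n)))" by (rule int_bdd[OF m\<phi> \<phi>b])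
  have ic: "integrable M (\<lambda>\<omega>. clip (eta n \<omega>))"
    by (rule int_bdd[where B=1]) (use n1 abs_clip in auto)
  have ih\<phi>: "integrable M (\<lambda>\<omega>. h (K n \<omega>) * \<phi> (restrict (\<lambda>i. Yf i \<omega>) (Cs n)))"
    by (rule int_bdd[where B="Bh * B"]) (use mh m\<phi> hb \<phi>b in \<open>auto simp: abs_mult intro: mult_mono'\<close>)
  have "expectation (\<lambda>\<omega>. clip (eta n \<omega>) * (h (K n \<omega>) * \<phi> (restrict (\<lambda>i. Yf i \<omega>) (Cs n)))) =
     expectation (\<lambda>\<omega>. clip (eta n \<omega>)) * expectation (\<lambda>\<omega>. h (K n \<omega>) * \<phi> (restrict (\<lambda>i. Yf i \<omega>) (Cs n)))"
    using indep_var_lebesgue_integral[OF iv1'[unfolded e1 e2] ic ih\<phi>] .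
  also have "expectation (\<lambda>\<omega>. h (K n \<omega>) * \<phi> (restrict (\<lambda>i. Yf i \<omega>) (Cs n))) =
     expectation (\<lambda>\<omega>. h (K n \<omega>)) * expectation (\<lambda>\<omega>. \<phi> (restrict (\<lambda>i. Yf i \<omega>) (Cs n)))"
    using indep_var_lebesgue_integral[OF iv2'[unfolded e3 e4] ih i\<phi>] .
  finally show ?thesis by (simp only: E_clip[OF n1(2)])
qed


definition bm :: "('a \<Rightarrow> real) \<Rightarrow> bool" where
  "bm f \<longleftrightarrow> f \<in> borel_measurable M \<and> (\<exists>B. \<forall>\<omega>. \<bar>f \<omega>\<bar> \<le> B)"

lemma bm_int: "bm f \<Longrightarrow> integrable M f"
  unfolding bm_def using int_bdd by blast

lemma bm_const: "bm (\<lambda>_. a)" unfolding bm_def by auto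
lemma bm_add: "bm f \<Longrightarrow> bm g \<Longrightarrow> bm (\<lambda>\<omega>. f \<omega> + g \<omega>)"
  unfolding bm_def by (auto intro!: exI[of _ "_ + _"] abs_triangle_ineq[THEN order_trans] add_mono)
lemma bm_diff: "bm f \<Longrightarrow> bm g \<Longrightarrow> bm (\<lambda>\<omega>. f \<omega> - g \<omega>)"
  unfolding bm_def by (auto intro!: exI[of _ "_ + _"] abs_triangle_ineq4[THEN order_trans] add_mono)
lemma bm_mult: "bm f \<Longrightarrow> bm g \<Longrightarrow> bm (\<lambda>\<omega>. f \<omega> * g \<omega>)"
proof -
  assume "bm f" "bm g"
  then obtain B1 B2 where b: "\<And>\<omega>. \<bar>f \<omega>\<bar> \<le> B1" "\<And>\<omega>. \<bar>g \<omega>\<bar> \<le> B2" and m: "f \<in> borel_measurable M" "g \<in> borel_measurable M"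
    unfolding bm_def by blast
  have "\<bar>f \<omega> * g \<omega>\<bar> \<le> B1 * B2" for \<omega>
    unfolding abs_mult by (rule mult_mono) (use b[of \<omega>] in auto)
  with m show ?thesis unfolding bm_def by auto
qed
lemma bm_sum: "(\<And>k. k \<in> A \<Longrightarrow> bm (f k)) \<Longrightarrow> bm (\<lambda>\<omega>. \<Sum>k\<in>A. f k \<omega>)"
proof (induction A rule: infinite_finite_induct)
  case (insert x F) then show ?case by (simp add: bm_add)
qed (simp_all add: bm_const)
lemma bm_W: "bm (W k)" unfolding bm_def using abs_W by auto
lemma bm_clip: "n \<ge> 2 \<Longrightarrow> bm (\<lambda>\<omega>. clip (eta n \<omega>))" unfolding bm_def using abs_clip by auto
lemma bm_K: "n \<ge> 3 \<Longrightarrow> bm (\<lambda>\<omega>. if K n \<omega> = 1 then a else b)"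
  unfolding bm_def by (auto intro!: cnt_comp[OF K_meas] exI[of _ "\<bar>a\<bar> + \<bar>b\<bar>"])
lemma bm_bound: "(\<And>\<omega>. \<bar>f \<omega>\<bar> \<le> B) \<Longrightarrow> bm f \<Longrightarrow> \<bar>expectation f\<bar> \<le> B"
proof -
  assume b: "\<And>\<omega>. \<bar>f \<omega>\<bar> \<le> B" and f: "bm f"
  have "norm (expectation f) \<le> expectation (\<lambda>x. norm (f x))" by (rule integral_norm_bound)
  also have "\<dots> \<le> expectation (\<lambda>x. B)"
    by (rule integral_mono[OF integrable_norm[OF bm_int[OF f]]]) (use b in auto)
  also have "\<dots> = B" using prob_space by simp
  finally show ?thesis by simp
qed

definition "d = p - q"
definition "D = d / 2"
definition "c = d / (2 - d)"

lemma d_bounds: "\<bar>d\<bar> < 1" using pqr unfolding d_def by (auto simp: abs_less_iff)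
lemma D_bound: "\<bar>D\<bar> \<le> 1/2" using d_bounds unfolding D_def by simp
lemma d2_pos: "2 - d > 0" using d_bounds by (simp add: abs_less_iff)
lemma c_eq: "c = D + D * c"
  using d2_pos unfolding c_def D_def by (simp add: field_simps)
lemma c_bound: "\<bar>c\<bar> \<le> 1"
proof -
  have h: "2 - d > 0" by (rule d2_pos)
  have "\<bar>c\<bar> = \<bar>d\<bar> / (2 - d)" using h unfolding c_def by (simp add: abs_divide)
  also have "\<dots> \<le> 1" using h d_bounds by (simp add: divide_le_eq_1_pos abs_less_iff abs_le_iff)
  finally show ?thesis .
qed

definition R :: "nat \<Rightarrow> 'a \<Rightarrow> real" where "R m \<omega> = (\<Sum>k=1..m. W k \<omega> - c)"
definition \<psi> :: "nat \<Rightarrow> (nat + nat \<Rightarrow> real + nat) \<Rightarrow> real" where "\<psi> m v = (\<Sum>k=1..m. wv k v - c)"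

lemma bm_R: "bm (R m)" unfolding R_def by (intro bm_sum bm_diff bm_W bm_const)

lemma deps_Cs: "k < n \<Longrightarrow> deps k \<subseteq> Cs n" unfolding deps_def Cs_def by auto

lemma R_restrict: "m < n \<Longrightarrow> R m \<omega> = \<psi> m (restrict (\<lambda>i. Yf i \<omega>) (Cs n))"
  unfolding R_def \<psi>_def by (intro sum.cong refl arg_cong2[where f="(-)"] W_restrict deps_Cs) auto

lemma W_restrict': "m < n \<Longrightarrow> W m \<omega> = wv m (restrict (\<lambda>i. Yf i \<omega>) (Cs n))"
  by (intro W_restrict deps_Cs)

lemma \<psi>_meas: "m < n \<Longrightarrow> \<psi> m \<in> borel_measurable (PiM (Cs n) (\<lambda>_. count_space UNIV))"
  unfolding \<psi>_def by (intro borel_measurable_sum borel_measurable_diff wv_meas deps_Cs) auto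

lemma \<psi>_bound: "\<bar>\<psi> m v\<bar> \<le> 2 * m"
proof -
  have "\<bar>\<psi> m v\<bar> \<le> (\<Sum>k=1..m. \<bar>wv k v - c\<bar>)" unfolding \<psi>_def by (rule sum_abs)
  also have "\<dots> \<le> (\<Sum>k=1..m. 2)"
  proof (intro sum_mono)
    fix k
    have "\<bar>wv k v - c\<bar> \<le> \<bar>wv k v\<bar> + \<bar>c\<bar>" by (rule abs_triangle_ineq4)
    then show "\<bar>wv k v - c\<bar> \<le> 2" using abs_wv[of k v] c_bound by linarith
  qed
  finally show ?thesis by simp
qed

end



context erw begin

lemma KEY:
  assumes n: "n \<ge> 3"
  shows "expectation (\<lambda>\<omega>. R (n-1) \<omega> * (W n \<omega> - c)) = D * expectation (\<lambda>\<omega>. R (n-1) \<omega> * (W (n-1) \<omega> - c))"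
proof -
  have lt: "n - 1 < n" using n by simp
  have n2: "n \<ge> 2" using n by simp
  define h1 :: "nat \<Rightarrow> real" where "h1 k = (if k = 1 then 1 else 0)" for k
  define h0 :: "nat \<Rightarrow> real" where "h0 k = (if k = 1 then 0 else 1)" for k
  have split: "R (n-1) \<omega> * (W n \<omega> - c) = clip (eta n \<omega>) * (h1 (K n \<omega>) * R (n-1) \<omega>) +
     clip (eta n \<omega>) * (h0 (K n \<omega>) * (R (n-1) \<omega> * W (n-1) \<omega>)) - c * R (n-1) \<omega>" for \<omega>
    using W_rec[OF n, of \<omega>] by (cases "K n \<omega> = 1") (simp_all add: h1_def h0_def left_diff_distrib right_diff_distrib mult_ac)
  have bh1: "bm (\<lambda>\<omega>. h1 (K n \<omega>))" and bh0: "bm (\<lambda>\<omega>. h0 (K n \<omega>))"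
    unfolding h1_def h0_def by (rule bm_K[OF n])+
  have E1: "expectation (\<lambda>\<omega>. clip (eta n \<omega>) * (h1 (K n \<omega>) * R (n-1) \<omega>)) = d * (1/2 * expectation (R (n-1)))"
  proof -
    have hb: "\<bar>h1 k\<bar> \<le> 1" for k by (simp add: h1_def)
    have I1: "expectation (\<lambda>\<omega>. clip (eta n \<omega>) * (h1 (K n \<omega>) * \<psi> (n-1) (restrict (\<lambda>i. Yf i \<omega>) (Cs n)))) =
      (p - q) * (expectation (\<lambda>\<omega>. h1 (K n \<omega>)) * expectation (\<lambda>\<omega>. \<psi> (n-1) (restrict (\<lambda>i. Yf i \<omega>) (Cs n))))"
      by (rule IND[OF n \<psi>_meas[OF lt] \<psi>_bound hb])
    show ?thesis
      using I1 E_K1[OF n] unfolding h1_def d_def by (simp only: R_restrict[OF lt, symmetric])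
  qed
  have E0: "expectation (\<lambda>\<omega>. clip (eta n \<omega>) * (h0 (K n \<omega>) * (R (n-1) \<omega> * W (n-1) \<omega>))) =
      d * (1/2 * expectation (\<lambda>\<omega>. R (n-1) \<omega> * W (n-1) \<omega>))"
  proof -
    have m: "(\<lambda>v. \<psi> (n - 1) v * wv (n - 1) v) \<in> borel_measurable (PiM (Cs n) (\<lambda>_. count_space UNIV))"
      by (intro borel_measurable_times \<psi>_meas[OF lt] wv_meas deps_Cs[OF lt])
    have b: "\<bar>\<psi> (n - 1) v * wv (n - 1) v\<bar> \<le> 2 * real (n - 1)" for v
      unfolding abs_mult using mult_mono[OF \<psi>_bound[of "n-1" v] abs_wv[of "n-1" v]] by simp
    have hb: "\<bar>h0 k\<bar> \<le> 1" for k by (simp add: h0_def)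
    have I0: "expectation (\<lambda>\<omega>. clip (eta n \<omega>) * (h0 (K n \<omega>) * (\<psi> (n-1) (restrict (\<lambda>i. Yf i \<omega>) (Cs n)) * wv (n-1) (restrict (\<lambda>i. Yf i \<omega>) (Cs n))))) =
      (p - q) * (expectation (\<lambda>\<omega>. h0 (K n \<omega>)) * expectation (\<lambda>\<omega>. \<psi> (n-1) (restrict (\<lambda>i. Yf i \<omega>) (Cs n)) * wv (n-1) (restrict (\<lambda>i. Yf i \<omega>) (Cs n))))"
      by (rule IND[OF n m b hb])
    show ?thesis
      using I0 E_K0[OF n] unfolding h0_def d_def by (simp only: R_restrict[OF lt, symmetric] W_restrict'[OF lt, symmetric])
  qed
  have "expectation (\<lambda>\<omega>. R (n-1) \<omega> * (W n \<omega> - c)) =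
     expectation (\<lambda>\<omega>. clip (eta n \<omega>) * (h1 (K n \<omega>) * R (n-1) \<omega>)) +
     expectation (\<lambda>\<omega>. clip (eta n \<omega>) * (h0 (K n \<omega>) * (R (n-1) \<omega> * W (n-1) \<omega>))) - expectation (\<lambda>\<omega>. c * R (n-1) \<omega>)"
  proof -
    have i1: "integrable M (\<lambda>\<omega>. clip (eta n \<omega>) * (h1 (K n \<omega>) * R (n-1) \<omega>))"
      by (intro bm_int bm_mult bm_clip[OF n2] bh1 bm_R)
    have i2: "integrable M (\<lambda>\<omega>. clip (eta n \<omega>) * (h0 (K n \<omega>) * (R (n-1) \<omega> * W (n-1) \<omega>)))"
      by (intro bm_int bm_mult bm_clip[OF n2] bh0 bm_R bm_W)
    have i3: "integrable M (\<lambda>\<omega>. c * R (n-1) \<omega>)"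
      by (intro bm_int bm_mult bm_const bm_R)
    show ?thesis unfolding split
      using Bochner_Integration.integral_add[OF i1 i2] Bochner_Integration.integral_diff[OF Bochner_Integration.integrable_add[OF i1 i2] i3]
      by simp
  qed
  also have "\<dots> = D * expectation (\<lambda>\<omega>. R (n-1) \<omega> * W (n-1) \<omega>) + (D - c) * expectation (R (n-1))"
    unfolding E1 E0 D_def by (simp add: algebra_simps)
  also have "\<dots> = D * expectation (\<lambda>\<omega>. R (n-1) \<omega> * (W (n-1) \<omega> - c))"
  proof -
    have i1: "integrable M (\<lambda>\<omega>. R (n-1) \<omega> * W (n-1) \<omega>)" by (intro bm_int bm_mult bm_R bm_W)
    have i2: "integrable M (\<lambda>\<omega>. c * R (n-1) \<omega>)" by (intro bm_int bm_mult bm_R bm_const)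
    have "expectation (\<lambda>\<omega>. R (n-1) \<omega> * (W (n-1) \<omega> - c)) = expectation (\<lambda>\<omega>. R (n-1) \<omega> * W (n-1) \<omega> - c * R (n-1) \<omega>)"
      by (simp add: right_diff_distrib mult.commute)
    also have "\<dots> = expectation (\<lambda>\<omega>. R (n-1) \<omega> * W (n-1) \<omega>) - c * expectation (R (n-1))"
      using Bochner_Integration.integral_diff[OF i1 i2] by simp
    finally have eq: "expectation (\<lambda>\<omega>. R (n-1) \<omega> * (W (n-1) \<omega> - c)) = expectation (\<lambda>\<omega>. R (n-1) \<omega> * W (n-1) \<omega>) - c * expectation (R (n-1))" .
    have hDc: "D - c = - (D * c)" using c_eq by linarith
    show ?thesis unfolding eq hDc by (simp add: algebra_simps)
  qed
  finally show ?thesis .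
qed


lemma abs_Wc: "\<bar>W k \<omega> - c\<bar> \<le> 2"
proof -
  have "\<bar>W k \<omega> - c\<bar> \<le> \<bar>W k \<omega>\<bar> + \<bar>c\<bar>" by (rule abs_triangle_ineq4)
  then show ?thesis using abs_W[of k \<omega>] c_bound by linarith
qed

lemma abs_R: "\<bar>R m \<omega>\<bar> \<le> 2 * m"
proof -
  have "\<bar>R m \<omega>\<bar> \<le> (\<Sum>k=1..m. \<bar>W k \<omega> - c\<bar>)" unfolding R_def by (rule sum_abs)
  also have "\<dots> \<le> (\<Sum>k=1..m. 2)" by (intro sum_mono abs_Wc)
  finally show ?thesis by simp
qed

lemma R_Suc: "R (Suc m) \<omega> = R m \<omega> + (W (Suc m) \<omega> - c)"
  unfolding R_def by simp

lemma bm_Wc: "bm (\<lambda>\<omega>. W k \<omega> - c)" by (intro bm_diff bm_W bm_const)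

lemma E_sq_bound: "\<bar>expectation (\<lambda>\<omega>. (W k \<omega> - c) * (W k \<omega> - c))\<bar> \<le> 4"
proof (rule bm_bound)
  show "\<bar>(W k \<omega> - c) * (W k \<omega> - c)\<bar> \<le> 4" for \<omega>
    unfolding abs_mult using mult_mono[OF abs_Wc[of k \<omega>] abs_Wc[of k \<omega>]] by simp
qed (intro bm_mult bm_Wc)

definition U :: "nat \<Rightarrow> real" where "U n = expectation (\<lambda>\<omega>. R (n-1) \<omega> * (W n \<omega> - c))"

lemma U_bound: "n \<ge> 2 \<Longrightarrow> \<bar>U n\<bar> \<le> 4"
proof (induction n rule: dec_induct)
  case base
  show ?case unfolding U_def
  proof (rule bm_bound)
    show "\<bar>R (2 - 1) \<omega> * (W 2 \<omega> - c)\<bar> \<le> 4" for \<omega>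
      unfolding abs_mult using mult_mono[OF abs_R[of 1 \<omega>] abs_Wc[of 2 \<omega>]] by simp
  qed (intro bm_mult bm_Wc bm_R)
next
  case (step n)
  have n3: "Suc n \<ge> 3" using step by simp
  have "U (Suc n) = D * expectation (\<lambda>\<omega>. R n \<omega> * (W n \<omega> - c))"
    unfolding U_def using KEY[OF n3] by simp
  also have "expectation (\<lambda>\<omega>. R n \<omega> * (W n \<omega> - c)) = U n + expectation (\<lambda>\<omega>. (W n \<omega> - c) * (W n \<omega> - c))"
  proof -
    obtain m where m: "n = Suc m" using step by (cases n) auto
    have "expectation (\<lambda>\<omega>. R n \<omega> * (W n \<omega> - c)) = expectation (\<lambda>\<omega>. R m \<omega> * (W n \<omega> - c) + (W n \<omega> - c) * (W n \<omega> - c))"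
      unfolding m R_Suc by (simp add: distrib_right)
    also have "\<dots> = expectation (\<lambda>\<omega>. R m \<omega> * (W n \<omega> - c)) + expectation (\<lambda>\<omega>. (W n \<omega> - c) * (W n \<omega> - c))"
      by (intro Bochner_Integration.integral_add bm_int bm_mult bm_R bm_Wc)
    finally show ?thesis unfolding U_def m by simp
  qed
  finally have eq: "U (Suc n) = D * (U n + expectation (\<lambda>\<omega>. (W n \<omega> - c) * (W n \<omega> - c)))" .
  have "\<bar>U n + expectation (\<lambda>\<omega>. (W n \<omega> - c) * (W n \<omega> - c))\<bar> \<le> 8"
    using step.IH E_sq_bound[of n] by linarith
  then have "\<bar>D\<bar> * \<bar>U n + expectation (\<lambda>\<omega>. (W n \<omega> - c) * (W n \<omega> - c))\<bar> \<le> 1/2 * 8"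
    using D_bound by (intro mult_mono) auto
  then show ?case unfolding eq abs_mult by simp
qed

definition V :: "nat \<Rightarrow> real" where "V m = expectation (\<lambda>\<omega>. R m \<omega> * R m \<omega>)"

lemma V_bound: "m \<ge> 1 \<Longrightarrow> V m \<le> 12 * m"
proof (induction m rule: dec_induct)
  case base
  have "\<bar>V 1\<bar> \<le> 4" unfolding V_def
  proof (rule bm_bound)
    show "\<bar>R 1 \<omega> * R 1 \<omega>\<bar> \<le> 4" for \<omega>
      unfolding abs_mult using mult_mono[OF abs_R[of 1 \<omega>] abs_R[of 1 \<omega>]] by simp
  qed (intro bm_mult bm_R)
  then show ?case by simp
next
  case (step m)
  have "V (Suc m) = expectation (\<lambda>\<omega>. R m \<omega> * R m \<omega> + 2 * (R m \<omega> * (W (Suc m) \<omega> - c)) + (W (Suc m) \<omega> - c) * (W (Suc m) \<omega> - c))"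
    unfolding V_def R_Suc by (simp add: algebra_simps)
  also have "\<dots> = V m + 2 * U (Suc m) + expectation (\<lambda>\<omega>. (W (Suc m) \<omega> - c) * (W (Suc m) \<omega> - c))"
    unfolding V_def U_def
    by (subst Bochner_Integration.integral_add, (intro bm_int bm_mult bm_add bm_R bm_Wc bm_const)+)+ simp
  finally have "V (Suc m) = V m + 2 * U (Suc m) + expectation (\<lambda>\<omega>. (W (Suc m) \<omega> - c) * (W (Suc m) \<omega> - c))" .
  moreover have "\<bar>U (Suc m)\<bar> \<le> 4" using step by (intro U_bound) simp
  moreover note E_sq_bound[of "Suc m"] step.IH
  ultimately show ?case by simp
qed


lemma erw_step_meas: "(\<lambda>\<omega>. erw_step X1 eta K n \<omega>) \<in> borel_measurable M"
proof (induction n rule: less_induct)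
  case (less n)
  consider "n = 0" | "n = 1" | "n = 2" | "n \<ge> 3" by linarith
  then show ?case
  proof cases
    case 1 then show ?thesis by (subst erw_step.simps) simp
  next
    case 2 then show ?thesis by (subst erw_step.simps) simp
  next
    case 3 then show ?thesis by (subst erw_step.simps) (simp add: borel_measurable_times eta_borel)
  next
    case 4
    have eq: "erw_step X1 eta K n \<omega> = eta n \<omega> * (\<Sum>j\<in>{1..<n}. (if K n \<omega> = j then 1 else 0) * erw_step X1 eta K j \<omega>)" for \<omega>
    proof -
      have "(\<Sum>j\<in>{1..<n}. (if K n \<omega> = j then 1 else 0) * erw_step X1 eta K j \<omega>) =
            (\<Sum>j\<in>{1..<n}. (if K n \<omega> = j then erw_step X1 eta K j \<omega> else 0))"
        by (intro sum.cong) auto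
      also have "\<dots> = (if K n \<omega> \<in> {1..<n} then erw_step X1 eta K (K n \<omega>) \<omega> else 0)"
        by (rule sum.delta') simp
      finally show ?thesis using 4 by (subst erw_step.simps) auto
    qed
    show ?thesis unfolding eq
      using 4 less.IH
      by (intro borel_measurable_times eta_borel borel_measurable_sum cnt_comp[OF K_meas]) auto
  qed
qed

lemma clip_id: "x = 1 \<or> x = -1 \<or> x = 0 \<Longrightarrow> clip x = x" unfolding clip_def by auto

lemma AE_link: "AE \<omega> in M. \<forall>n\<ge>1. erw_step X1 eta K n \<omega> = X1 \<omega> * W n \<omega>"
  using AE_eta AE_K
proof eventually_elim
  case (elim \<omega>)
  show ?case
  proof (intro allI impI)
    fix n :: nat assume "n \<ge> 1"
    then show "erw_step X1 eta K n \<omega> = X1 \<omega> * W n \<omega>"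
    proof (induction n rule: less_induct)
      case (less n)
      consider "n = 1" | "n = 2" | "n \<ge> 3" using less.prems by linarith
      then show ?case
      proof cases
        case 1 then show ?thesis using W_1[of \<omega>] by (subst erw_step.simps) simp
      next
        case 2 then show ?thesis using elim(1) clip_id[of "eta 2 \<omega>"] by (subst erw_step.simps) (simp add: W_2)
      next
        case 3
        have ce: "clip (eta n \<omega>) = eta n \<omega>" using elim(1) 3 clip_id[of "eta n \<omega>"] by auto
        have K: "K n \<omega> = 1 \<or> K n \<omega> = n - 1" using elim(2) 3 by auto
        show ?thesis
        proof (cases "K n \<omega> = 1")
          case True
          have e1: "erw_step X1 eta K n \<omega> = eta n \<omega> * erw_step X1 eta K 1 \<omega>" using 3 True by (subst erw_step.simps) simp
          have e2: "erw_step X1 eta K 1 \<omega> = X1 \<omega>" by (subst erw_step.simps) simp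
          show ?thesis unfolding e1 e2 W_rec[OF 3, of \<omega>] using True ce by simp
        next
          case False
          then have Kn: "K n \<omega> = n - 1" using K by auto
          have IH: "erw_step X1 eta K (n - 1) \<omega> = X1 \<omega> * W (n - 1) \<omega>" using 3 by (intro less.IH) auto
          show ?thesis using 3 False Kn IH by (subst erw_step.simps) (simp add: W_rec[OF 3] ce)
        qed
      qed
    qed
  qed
qed

definition Yn :: "nat \<Rightarrow> 'a \<Rightarrow> real" where "Yn n \<omega> = erw_sum X1 eta K n \<omega> / real n"
definition Z :: "'a \<Rightarrow> real" where "Z \<omega> = c * X1 \<omega>"

lemma Yn_meas: "Yn n \<in> borel_measurable M"
  unfolding Yn_def erw_sum_def by (intro borel_measurable_divide borel_measurable_sum erw_step_meas) simp

lemma Z_meas: "Z \<in> borel_measurable M"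
  unfolding Z_def by simp

lemma sumW: "(\<Sum>k=1..n. W k \<omega>) = R n \<omega> + n * c"
  unfolding R_def by (simp add: sum_subtractf)

lemma AE_Yn: "AE \<omega> in M. \<forall>n\<ge>1. Yn n \<omega> = X1 \<omega> * (R n \<omega> + n * c) / n"
  using AE_link
proof eventually_elim
  case (elim \<omega>)
  show ?case
  proof (intro allI impI)
    fix n :: nat assume n: "n \<ge> 1"
    have "erw_sum X1 eta K n \<omega> = (\<Sum>k=1..n. X1 \<omega> * W k \<omega>)"
      unfolding erw_sum_def using elim by (intro sum.cong) auto
    also have "\<dots> = X1 \<omega> * (\<Sum>k=1..n. W k \<omega>)" by (simp add: sum_distrib_left)
    also have "\<dots> = X1 \<omega> * (R n \<omega> + n * c)" by (simp only: sumW)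
    finally show "Yn n \<omega> = X1 \<omega> * (R n \<omega> + n * c) / n" unfolding Yn_def by simp
  qed
qed

lemma abs_X1: "AE \<omega> in M. \<bar>X1 \<omega>\<bar> \<le> 1"
  using AE_X1 by eventually_elim auto

lemma Z_bound: "AE \<omega> in M. \<bar>Z \<omega>\<bar> \<le> 1"
  using abs_X1
proof eventually_elim
  case (elim \<omega>)
  then show ?case unfolding Z_def abs_mult using mult_mono[OF c_bound elim] by simp
qed

lemma Yn_bound: "AE \<omega> in M. \<forall>n\<ge>1. \<bar>Yn n \<omega>\<bar> \<le> 1"
  using AE_Yn abs_X1
proof eventually_elim
  case (elim \<omega>)
  show ?case
  proof (intro allI impI)
    fix n :: nat assume n: "n \<ge> 1"
    have s: "\<bar>R n \<omega> + n * c\<bar> \<le> n"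
    proof -
      have "\<bar>R n \<omega> + n * c\<bar> = \<bar>\<Sum>k=1..n. W k \<omega>\<bar>" by (simp only: sumW)
      also have "\<dots> \<le> (\<Sum>k=1..n. \<bar>W k \<omega>\<bar>)" by (rule sum_abs)
      also have "\<dots> \<le> (\<Sum>k=1..n. 1)" by (intro sum_mono abs_W)
      finally show ?thesis by simp
    qed
    have "\<bar>X1 \<omega> * (R n \<omega> + n * c)\<bar> \<le> 1 * real n"
      unfolding abs_mult by (rule mult_mono) (use elim s in auto)
    then show "\<bar>Yn n \<omega>\<bar> \<le> 1" using elim n by (simp add: abs_divide divide_le_eq_1)
  qed
qed

lemma L2: assumes n: "n \<ge> 1" shows "expectation (\<lambda>\<omega>. (Yn n \<omega> - Z \<omega>)^2) \<le> 12 / n"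
proof -
  have "expectation (\<lambda>\<omega>. (Yn n \<omega> - Z \<omega>)^2) \<le> expectation (\<lambda>\<omega>. R n \<omega> * R n \<omega> / (real n)^2)"
  proof (rule integral_mono_AE)
    show "integrable M (\<lambda>\<omega>. R n \<omega> * R n \<omega> / (real n)^2)"
      by (intro Bochner_Integration.integrable_divide bm_int bm_mult bm_R)
    show "AE \<omega> in M. (Yn n \<omega> - Z \<omega>)^2 \<le> R n \<omega> * R n \<omega> / (real n)^2"
      using AE_Yn abs_X1
    proof eventually_elim
      case (elim \<omega>)
      have "Yn n \<omega> - Z \<omega> = X1 \<omega> * R n \<omega> / n"
        using elim(1) n unfolding Z_def by (simp add: field_simps)
      then have "(Yn n \<omega> - Z \<omega>)^2 = (X1 \<omega>)^2 * (R n \<omega> * R n \<omega> / (real n)^2)"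
        by (simp add: power2_eq_square field_simps)
      also have "\<dots> \<le> 1 * (R n \<omega> * R n \<omega> / (real n)^2)"
      proof (rule mult_right_mono)
        have "\<bar>X1 \<omega>\<bar>^2 \<le> 1^2" using elim(2) by (intro power_mono) auto
        then show "(X1 \<omega>)^2 \<le> 1" by simp
      qed simp
      finally show ?case by simp
    qed
    show "integrable M (\<lambda>\<omega>. (Yn n \<omega> - Z \<omega>)^2)"
    proof (rule integrable_const_bound[where B=4])
      show "AE x in M. norm ((Yn n x - Z x)^2) \<le> 4"
        using Yn_bound Z_bound
      proof eventually_elim
        case (elim x)
        then have "\<bar>Yn n x - Z x\<bar> \<le> 2" using n by (auto simp: abs_le_iff)
        then have "\<bar>Yn n x - Z x\<bar>^2 \<le> 2^2" by (intro power_mono) auto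
        then show ?case by simp
      qed
    qed (use Yn_meas Z_meas in simp)
  qed
  also have "\<dots> = V n / (real n)^2" unfolding V_def by simp
  also have "\<dots> \<le> 12 * n / (real n)^2" using V_bound[OF n] by (intro divide_right_mono) auto
  also have "\<dots> = 12 / n" by (simp add: power2_eq_square)
  finally show ?thesis .
qed

end



lemma (in prob_space) conv_core:
  fixes Y :: "nat \<Rightarrow> 'a \<Rightarrow> real" and Z :: "'a \<Rightarrow> real" and f :: "real \<Rightarrow> real"
  assumes Ym: "\<And>n. Y n \<in> borel_measurable M" and Zm: "Z \<in> borel_measurable M"
    and Yb: "AE \<omega> in M. \<forall>n\<ge>1. \<bar>Y n \<omega>\<bar> \<le> 1" and Zb: "AE \<omega> in M. \<bar>Z \<omega>\<bar> \<le> 1"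
    and L2: "\<And>n. n \<ge> 1 \<Longrightarrow> expectation (\<lambda>\<omega>. (Y n \<omega> - Z \<omega>)^2) \<le> B / n"
    and fc: "continuous_on {-1..1} f" and fm: "f \<in> borel_measurable borel"
  shows "(\<lambda>n. expectation (\<lambda>\<omega>. f (Y n \<omega>))) \<longlonglongrightarrow> expectation (\<lambda>\<omega>. f (Z \<omega>))"
proof (rule LIMSEQ_I)
  fix r :: real assume r: "r > 0"
  have "bounded (f ` {-1..1})" by (intro compact_imp_bounded compact_continuous_image fc) simp
  then obtain Mf where Mf': "\<forall>x\<in>{-1..1}. \<bar>f x\<bar> \<le> Mf" unfolding bounded_real by auto
  have Mf: "\<And>x. x \<in> {-1..1} \<Longrightarrow> \<bar>f x\<bar> \<le> Mf" using Mf' by blast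
  have Mf0: "Mf \<ge> 0" using Mf[of 0] by simp
  have "uniformly_continuous_on {-1..1} f" by (intro compact_uniformly_continuous fc) simp
  then obtain \<delta> where \<delta>: "\<delta> > 0" and u: "\<And>x y. x \<in> {-1..1} \<Longrightarrow> y \<in> {-1..1} \<Longrightarrow> dist y x < \<delta> \<Longrightarrow> dist (f y) (f x) < r/2"
    unfolding uniformly_continuous_on_def using r by (metis half_gt_zero)
  define C where "C = 2 * Mf / \<delta>^2"
  have C0: "C \<ge> 0" unfolding C_def using Mf0 by simp
  have pw: "\<bar>f y - f z\<bar> \<le> r/2 + C * (y - z)^2" if y: "\<bar>y\<bar> \<le> 1" and z: "\<bar>z\<bar> \<le> 1" for y z
  proof (cases "\<bar>y - z\<bar> < \<delta>")
    case True
    then have "\<bar>f y - f z\<bar> < r/2" using u[of z y] y z by (auto simp: dist_real_def abs_le_iff)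
    moreover have "C * (y - z)^2 \<ge> 0" using C0 by simp
    ultimately show ?thesis by linarith
  next
    case False
    then have "\<delta>^2 \<le> \<bar>y - z\<bar>^2" using \<delta> by (intro power_mono) auto
    then have "\<delta>^2 \<le> (y - z)^2" by simp
    then have "C * \<delta>^2 \<le> C * (y - z)^2" using C0 by (rule mult_left_mono)
    moreover have "C * \<delta>^2 = 2 * Mf" unfolding C_def using \<delta> by simp
    moreover have "\<bar>f y - f z\<bar> \<le> 2 * Mf" using Mf[of y] Mf[of z] y z by (auto simp: abs_le_iff)
    ultimately show ?thesis using r by linarith
  qed
  have fYm: "(\<lambda>\<omega>. f (Y n \<omega>)) \<in> borel_measurable M" for n by (rule measurable_compose[OF Ym fm])
  have fZm: "(\<lambda>\<omega>. f (Z \<omega>)) \<in> borel_measurable M" by (rule measurable_compose[OF Zm fm])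
  have intZ: "integrable M (\<lambda>\<omega>. f (Z \<omega>))"
  proof (rule integrable_const_bound[where B=Mf])
    show "AE x in M. norm (f (Z x)) \<le> Mf" using Zb by eventually_elim (use Mf in \<open>auto simp: abs_le_iff\<close>)
  qed (rule fZm)
  have intY: "n \<ge> 1 \<Longrightarrow> integrable M (\<lambda>\<omega>. f (Y n \<omega>))" for n
  proof (rule integrable_const_bound[where B=Mf])
    assume n: "n \<ge> 1"
    show "AE x in M. norm (f (Y n x)) \<le> Mf" using Yb by eventually_elim (use Mf n in \<open>auto simp: abs_le_iff\<close>)
  qed (rule fYm)
  have intD: "n \<ge> 1 \<Longrightarrow> integrable M (\<lambda>\<omega>. (Y n \<omega> - Z \<omega>)^2)" for n
  proof (rule integrable_const_bound[where B=4])
    assume n: "n \<ge> 1"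
    show "AE x in M. norm ((Y n x - Z x)^2) \<le> 4"
      using Yb Zb
    proof eventually_elim
      case (elim x)
      then have "\<bar>Y n x - Z x\<bar> \<le> 2" using n by (auto simp: abs_le_iff)
      then have "\<bar>Y n x - Z x\<bar>^2 \<le> 2^2" by (intro power_mono) auto
      then show ?case by simp
    qed
  qed (use Ym Zm in simp)
  obtain N :: nat where N: "N > C * B / (r/2)" using reals_Archimedean2 by blast
  show "\<exists>no. \<forall>n\<ge>no. norm (expectation (\<lambda>\<omega>. f (Y n \<omega>)) - expectation (\<lambda>\<omega>. f (Z \<omega>))) < r"
  proof (intro exI allI impI)
    fix n assume n: "n \<ge> Suc N"
    then have n1: "n \<ge> 1" by simp
    have "norm (expectation (\<lambda>\<omega>. f (Y n \<omega>)) - expectation (\<lambda>\<omega>. f (Z \<omega>))) =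
      norm (expectation (\<lambda>\<omega>. f (Y n \<omega>) - f (Z \<omega>)))"
      by (simp add: Bochner_Integration.integral_diff[OF intY[OF n1] intZ])
    also have "\<dots> \<le> expectation (\<lambda>\<omega>. norm (f (Y n \<omega>) - f (Z \<omega>)))" by (rule integral_norm_bound)
    also have "\<dots> \<le> expectation (\<lambda>\<omega>. r/2 + C * (Y n \<omega> - Z \<omega>)^2)"
    proof (rule integral_mono_AE)
      show "integrable M (\<lambda>\<omega>. norm (f (Y n \<omega>) - f (Z \<omega>)))"
        by (intro integrable_norm Bochner_Integration.integrable_diff intY[OF n1] intZ)
      show "integrable M (\<lambda>\<omega>. r/2 + C * (Y n \<omega> - Z \<omega>)^2)"
        by (intro Bochner_Integration.integrable_add integrable_mult_right intD[OF n1]) simp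
      show "AE \<omega> in M. norm (f (Y n \<omega>) - f (Z \<omega>)) \<le> r/2 + C * (Y n \<omega> - Z \<omega>)^2"
        using Yb Zb by eventually_elim (use n1 pw in auto)
    qed
    also have "\<dots> = r/2 + C * expectation (\<lambda>\<omega>. (Y n \<omega> - Z \<omega>)^2)"
      using intD[OF n1] prob_space by (simp add: Bochner_Integration.integral_add)
    also have "\<dots> \<le> r/2 + C * (B / n)"
      using mult_left_mono[OF L2[OF n1] C0] by simp
    also have "\<dots> < r"
    proof -
      have B0: "B \<ge> 0"
      proof -
        have "0 \<le> expectation (\<lambda>\<omega>. (Y n \<omega> - Z \<omega>)^2)" by (rule integral_nonneg_AE) simp
        then have "0 \<le> B / n" using L2[OF n1] by linarith
        then show ?thesis using n1 by (simp add: zero_le_divide_iff)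
      qed
      have "C * B < r/2 * N" using N r by (simp add: field_simps)
      also have "\<dots> \<le> r/2 * n" using n r by simp
      finally have "C * B / n < r/2" using n1 by (simp add: field_simps)
      moreover have "C * (B / n) = C * B / n" by simp
      ultimately show ?thesis by linarith
    qed
    finally show "norm (expectation (\<lambda>\<omega>. f (Y n \<omega>)) - expectation (\<lambda>\<omega>. f (Z \<omega>))) < r" .
  qed
qed



context erw begin

lemma c_alt: "(p - q) / (2 + q - p) = c"
proof -
  have "2 + q - p = 2 - d" unfolding d_def by simp
  then show ?thesis unfolding c_def d_def by simp
qed

lemma E_limit: "measure_pmf.expectation (erw_limit_pmf p q r) f = p * f c + r * f 0 + q * f (-c)"
proof -
  let ?xs = "[(c, p), (0, r), (- c, q)]"
  have P: "erw_limit_pmf p q r = pmf_of_list ?xs" unfolding erw_limit_pmf_def c_alt ..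
  have wf: "pmf_of_list_wf ?xs" using pqr by (intro pmf_of_list_wfI) auto
  have "measure_pmf.expectation (pmf_of_list ?xs) f = (\<Sum>a\<in>{c, 0, -c}. f a * pmf (pmf_of_list ?xs) a)"
    by (rule integral_measure_pmf_real) (use set_pmf_of_list[OF wf] in auto)
  also have "\<dots> = p * f c + r * f 0 + q * f (-c)"
  proof (cases "c = 0")
    case True
    have "pmf (pmf_of_list ?xs) c = p + r + q" using pmf_pmf_of_list[OF wf, of c] True by simp
    then show ?thesis using True by (simp add: algebra_simps)
  next
    case False
    then have "c \<noteq> - c" by simp
    then show ?thesis using False by (simp add: pmf_pmf_of_list[OF wf] algebra_simps)
  qed
  finally show ?thesis unfolding P .
qed

lemma E_Z: assumes fm: "f \<in> borel_measurable borel"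
  shows "expectation (\<lambda>\<omega>. f (Z \<omega>)) = p * f c + r * f 0 + q * f (-c)"
proof -
  let ?i = "\<lambda>a \<omega>. if X1 \<omega> = a then 1 else (0::real)"
  have mi: "?i a \<in> borel_measurable M" for a by (rule cnt_comp[OF X1_meas])
  have ii: "integrable M (\<lambda>\<omega>. b * ?i a \<omega>)" for a b
    by (intro bm_int bm_mult bm_const) (auto simp: bm_def mi intro!: exI[of _ 1])
  have "expectation (\<lambda>\<omega>. f (Z \<omega>)) = expectation (\<lambda>\<omega>. f c * ?i 1 \<omega> + f 0 * ?i 0 \<omega> + f (-c) * ?i (-1) \<omega>)"
  proof (rule integral_cong_AE)
    show "(\<lambda>\<omega>. f (Z \<omega>)) \<in> borel_measurable M" by (rule measurable_compose[OF Z_meas fm])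
    show "(\<lambda>\<omega>. f c * ?i 1 \<omega> + f 0 * ?i 0 \<omega> + f (-c) * ?i (-1) \<omega>) \<in> borel_measurable M"
      using mi by simp
    show "AE \<omega> in M. f (Z \<omega>) = f c * ?i 1 \<omega> + f 0 * ?i 0 \<omega> + f (-c) * ?i (-1) \<omega>"
      using AE_X1 by eventually_elim (auto simp: Z_def)
  qed
  also have "\<dots> = expectation (\<lambda>\<omega>. f c * ?i 1 \<omega>) + expectation (\<lambda>\<omega>. f 0 * ?i 0 \<omega>) + expectation (\<lambda>\<omega>. f (-c) * ?i (-1) \<omega>)"
    using ii by (simp add: Bochner_Integration.integral_add)
  also have "\<dots> = p * f c + r * f 0 + q * f (-c)"
  proof -
    have e: "expectation (\<lambda>\<omega>. b * ?i a \<omega>) = b * prob {\<omega> \<in> space M. X1 \<omega> = a}" for a b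
      using int_ind[OF X1_meas, of a] by simp
    show ?thesis unfolding e meas_X1 by (simp add: mult.commute)
  qed
  finally show ?thesis .
qed

lemma conv: fixes f :: "real \<Rightarrow> real" assumes "continuous_on {-1..1} f" "f \<in> borel_measurable borel"
  shows "(\<lambda>n. expectation (\<lambda>\<omega>. f (Yn n \<omega>))) \<longlonglongrightarrow> measure_pmf.expectation (erw_limit_pmf p q r) f"
  using conv_core[OF Yn_meas Z_meas Yn_bound Z_bound L2 assms] E_Z[OF assms(2)] E_limit by simp

end

theorem theorem8p1:
  fixes M :: "'a measure" and p q r :: real
    and X1 :: "'a \<Rightarrow> real" and eta :: "nat \<Rightarrow> 'a \<Rightarrow> real" and K :: "nat \<Rightarrow> 'a \<Rightarrow> nat"
  assumes "p \<in> {0<..<1}" "q \<in> {0<..<1}" "r \<in> {0<..<1}" "p + q + r = 1"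
    and "erw_hyps M p q r X1 eta K"
  shows "weak_conv_m (\<lambda>n. distr M borel (\<lambda>\<omega>. erw_sum X1 eta K n \<omega> / real n))
           (distr (measure_pmf (erw_limit_pmf p q r)) borel (\<lambda>x. x)) \<and>
         (\<forall>\<alpha>::real. \<alpha> > 0 \<longrightarrow>
           (\<lambda>n. prob_space.expectation M (\<lambda>\<omega>. \<bar>erw_sum X1 eta K n \<omega> / real n\<bar> powr \<alpha>))
             \<longlonglongrightarrow> measure_pmf.expectation (erw_limit_pmf p q r) (\<lambda>x. \<bar>x\<bar> powr \<alpha>)) \<and>
         (\<forall>k::nat. k > 0 \<longrightarrow>
           (\<lambda>n. prob_space.expectation M (\<lambda>\<omega>. (erw_sum X1 eta K n \<omega> / real n) ^ k))
             \<longlonglongrightarrow> measure_pmf.expectation (erw_limit_pmf p q r) (\<lambda>x. x ^ k))"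
proof -
  have ps: "prob_space M" using assms(5) unfolding erw_hyps_def by blast
  interpret E: erw M p q r X1 eta K
    by (intro erw.intro ps erw_axioms.intro assms)
  have Y: "erw_sum X1 eta K n \<omega> / real n = E.Yn n \<omega>" for n \<omega>
    unfolding E.Yn_def ..
  show ?thesis unfolding Y
  proof (intro conjI allI impI)
    show "weak_conv_m (\<lambda>n. distr M borel (E.Yn n)) (distr (measure_pmf (erw_limit_pmf p q r)) borel (\<lambda>x. x))"
    proof (rule integral_bdd_continuous_conv_imp_weak_conv)
      show "real_distribution (distr M borel (E.Yn n))" for n
        by (rule E.real_distribution_distr[OF E.Yn_meas])
      show "real_distribution (distr (measure_pmf (erw_limit_pmf p q r)) borel (\<lambda>x. x))"
        by (rule prob_space.real_distribution_distr) (auto simp: measure_pmf.prob_space_axioms)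
      fix f :: "real \<Rightarrow> real" assume fc: "\<And>x. isCont f x" and "\<And>x. \<bar>f x\<bar> \<le> 1"
      have fm: "f \<in> borel_measurable borel"
        by (intro borel_measurable_continuous_onI continuous_at_imp_continuous_on) (use fc in auto)
      have fc': "continuous_on {-1..1} f" by (intro continuous_at_imp_continuous_on) (use fc in auto)
      have "integral\<^sup>L (distr M borel (E.Yn n)) f = E.expectation (\<lambda>\<omega>. f (E.Yn n \<omega>))" for n
        by (rule integral_distr[OF E.Yn_meas fm])
      moreover have "integral\<^sup>L (distr (measure_pmf (erw_limit_pmf p q r)) borel (\<lambda>x. x)) f =
          measure_pmf.expectation (erw_limit_pmf p q r) f"
        by (subst integral_distr) (auto simp: fm)
      ultimately show "(\<lambda>n. integral\<^sup>L (distr M borel (E.Yn n)) f) \<longlonglongrightarrow>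
          integral\<^sup>L (distr (measure_pmf (erw_limit_pmf p q r)) borel (\<lambda>x. x)) f"
        using E.conv[OF fc' fm] by simp
    qed
  next
    fix \<alpha> :: real assume a: "\<alpha> > 0"
    have cU: "continuous_on UNIV (\<lambda>x::real. \<bar>x\<bar> powr \<alpha>)"
      by (intro continuous_on_powr' continuous_intros) (use a in auto)
    have c1: "continuous_on {-1..1} (\<lambda>x::real. \<bar>x\<bar> powr \<alpha>)"
      by (rule continuous_on_subset[OF cU]) simp
    show "(\<lambda>n. E.expectation (\<lambda>\<omega>. \<bar>E.Yn n \<omega>\<bar> powr \<alpha>)) \<longlonglongrightarrow>
        measure_pmf.expectation (erw_limit_pmf p q r) (\<lambda>x. \<bar>x\<bar> powr \<alpha>)"
      by (rule E.conv[OF c1 borel_measurable_continuous_onI[OF cU]])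
  next
    fix k :: nat assume "k > 0"
    have cU: "continuous_on UNIV (\<lambda>x::real. x ^ k)" by (intro continuous_intros)
    have c1: "continuous_on {-1..1} (\<lambda>x::real. x ^ k)" by (intro continuous_intros)
    show "(\<lambda>n. E.expectation (\<lambda>\<omega>. E.Yn n \<omega> ^ k)) \<longlonglongrightarrow>
        measure_pmf.expectation (erw_limit_pmf p q r) (\<lambda>x. x ^ k)"
      by (rule E.conv[OF c1 borel_measurable_continuous_onI[OF cU]])
  qed
qed


end
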